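(* Let $a,b>0$, $0<\alpha<1$, $0<A<1$, $B>0$ and $\beta=A+iB$. Define for $\omega>0$ $$\hat E(\omega)=a(i\omega)^{\alpha}+b\big((i\omega)^{\beta}+(i\omega)^{\bar\beta}\big).$$ (i) If $\operatorname{Re}\hat E(\omega)\ge0$ and $\operatorname{Im}\hat E(\omega)\ge 0$ for all $\omega>0$, then $A=\alpha$. (ii) If $A=\alpha$, then $\operatorname{Re}\hat E(\omega)\ge0$ and $\operatorname{Im}\hat E(\omega)\ge 0$ for all $\omega>0$ if and only if $$a\ge 2b\cosh\frac{B\pi}{2}\sqrt{1+\Big(\cot\frac{\alpha\pi}{2}\tanh\frac{B\pi}{2}\Big)^2}\quad\text{when }\alpha\in(0,\tfrac12],$$ $$a\ge 2b\cosh\frac{B\pi}{2}\sqrt{1+\Big(\tan\frac{\alpha\pi}{2}\tanh\frac{B\pi}{2}\Big)^2}\quad\text{when }\alpha\in[\tfrac12,1).$$ In particular these conditions imply $a\ge 2b$.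
   Context: For $\omega>0$ and $\gamma\in\mathbb C$, $(i\omega)^\gamma=\omega^\gamma e^{i\gamma\pi/2}$ with $\omega^\gamma=e^{\gamma\ln\omega}$ (principal branch). *)

theory Defs
  imports "HOL-Analysis.Analysis"
begin

text \<open>(i omega) powered to gamma, for omega > 0: omega^gamma * e^(i gamma pi/2),
  with omega^gamma = exp(gamma ln omega) (principal branch).\<close>
definition ipow :: "real \<Rightarrow> complex \<Rightarrow> complex" where
  "ipow \<omega> \<gamma> = exp (\<gamma> * complex_of_real (ln \<omega>)) * exp (\<gamma> * \<i> * complex_of_real pi / 2)"

definition Ehat :: "real \<Rightarrow> real \<Rightarrow> real \<Rightarrow> complex \<Rightarrow> real \<Rightarrow> complex" where
  "Ehat a b \<alpha> \<beta> \<omega> =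
     complex_of_real a * ipow \<omega> (complex_of_real \<alpha>)
     + complex_of_real b * (ipow \<omega> \<beta> + ipow \<omega> (cnj \<beta>))"

end

theory Submission imports Defs begin

lemma ipow_Re: "Re (ipow w (Complex x y)) = exp (x * ln w - y*pi/2) * cos (y * ln w + x*pi/2)"
  unfolding ipow_def exp_add[symmetric] Re_exp
  by (simp add: algebra_simps)

lemma ipow_Im: "Im (ipow w (Complex x y)) = exp (x * ln w - y*pi/2) * sin (y * ln w + x*pi/2)"
  unfolding ipow_def exp_add[symmetric] Im_exp
  by (simp add: algebra_simps)

lemma Ehat_Re:
  fixes a b \<alpha> A B w :: real
  defines "c \<equiv> B*pi/2" and "p \<equiv> A*pi/2" and "\<phi> \<equiv> B * ln w"
  shows "Re (Ehat a b \<alpha> (Complex A B) w) = a * exp (\<alpha> * ln w) * cos (\<alpha>*pi/2)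
     + 2*b*exp (A * ln w) * (cosh c * cos p * cos \<phi> + sinh c * sin p * sin \<phi>)"
proof -
  have 1: "complex_of_real \<alpha> = Complex \<alpha> 0" "cnj (Complex A B) = Complex A (-B)"
    by (simp_all add: complex_eq_iff)
  have e1: "exp (A * ln w - B*pi/2) = exp (A * ln w) * exp (-c)"
    by (simp add: c_def exp_add[symmetric])
  have e2: "exp (A * ln w - (-B)*pi/2) = exp (A * ln w) * exp c"
    by (simp add: c_def exp_add[symmetric])
  have "Re (Ehat a b \<alpha> (Complex A B) w) = a * exp (\<alpha> * ln w) * cos (\<alpha>*pi/2)
     + b * (exp (A * ln w) * exp (-c) * cos (\<phi> + p) + exp (A * ln w) * exp c * cos (-\<phi> + p))"
    unfolding Ehat_def 1 using ipow_Re[of w \<alpha> 0] ipow_Re[of w A B] ipow_Re[of w A "-B"] e1 e2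
    by (simp add: \<phi>_def p_def)
  also have "\<dots> = a * exp (\<alpha> * ln w) * cos (\<alpha>*pi/2)
     + 2*b*exp (A * ln w) * (cosh c * cos p * cos \<phi> + sinh c * sin p * sin \<phi>)"
    by (simp add: cos_add cos_diff cosh_def sinh_def algebra_simps)
  finally show ?thesis .
qed

lemma Ehat_Im:
  fixes a b \<alpha> A B w :: real
  defines "c \<equiv> B*pi/2" and "p \<equiv> A*pi/2" and "\<phi> \<equiv> B * ln w"
  shows "Im (Ehat a b \<alpha> (Complex A B) w) = a * exp (\<alpha> * ln w) * sin (\<alpha>*pi/2)
     + 2*b*exp (A * ln w) * (cosh c * sin p * cos \<phi> - sinh c * cos p * sin \<phi>)"
proof -
  have 1: "complex_of_real \<alpha> = Complex \<alpha> 0" "cnj (Complex A B) = Complex A (-B)"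
    by (simp_all add: complex_eq_iff)
  have e1: "exp (A * ln w - B*pi/2) = exp (A * ln w) * exp (-c)"
    by (simp add: c_def exp_add[symmetric])
  have e2: "exp (A * ln w - (-B)*pi/2) = exp (A * ln w) * exp c"
    by (simp add: c_def exp_add[symmetric])
  have "Im (Ehat a b \<alpha> (Complex A B) w) = a * exp (\<alpha> * ln w) * sin (\<alpha>*pi/2)
     + b * (exp (A * ln w) * exp (-c) * sin (\<phi> + p) + exp (A * ln w) * exp c * sin (-\<phi> + p))"
    unfolding Ehat_def 1 using ipow_Im[of w \<alpha> 0] ipow_Im[of w A B] ipow_Im[of w A "-B"] e1 e2
    by (simp add: \<phi>_def p_def)
  also have "\<dots> = a * exp (\<alpha> * ln w) * sin (\<alpha>*pi/2)
     + 2*b*exp (A * ln w) * (cosh c * sin p * cos \<phi> - sinh c * cos p * sin \<phi>)"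
    by (simp add: sin_add sin_diff cosh_def sinh_def algebra_simps)
  finally show ?thesis .
qed

lemma amp:
  fixes K x y :: real
  shows "(\<forall>t. K + x * cos t + y * sin t \<ge> 0) \<longleftrightarrow> K \<ge> 0 \<and> K^2 \<ge> x^2 + y^2"
proof
  assume H: "\<forall>t. K + x * cos t + y * sin t \<ge> 0"
  show "K \<ge> 0 \<and> K^2 \<ge> x^2 + y^2"
  proof (cases "x^2 + y^2 = 0")
    case True
    then have "x = 0" "y = 0" by (auto simp: sum_power2_eq_zero_iff)
    with H True show ?thesis by auto
  next
    case False
    define r where "r = sqrt (x^2+y^2)"
    have "x^2+y^2 \<ge> 0" by simp
    then have "x^2+y^2 > 0" using False by linarith
    then have r: "r > 0" "r^2 = x^2+y^2" by (auto simp: r_def)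
    have "(-x/r)^2 + (-y/r)^2 = 1" using r False by (simp add: power_divide add_divide_distrib[symmetric])
    then obtain t where t: "-x/r = cos t" "-y/r = sin t" by (rule sincos_total_2pi) 
    have "K + x * cos t + y * sin t = K - r"
    proof -
      have "K + x * cos t + y * sin t = K - (x^2+y^2)/r"
        unfolding t[symmetric] by (simp add: power2_eq_square diff_divide_distrib add_divide_distrib)
      also have "\<dots> = K - r" unfolding r(2)[symmetric] using r(1) by (simp add: power2_eq_square)
      finally show ?thesis .
    qed
    then have "K \<ge> r" using H[rule_format, of t] by linarith
    moreover have "K^2 \<ge> r^2" using power_mono[OF calculation, of 2] r by simp
    ultimately show ?thesis using r by simp
  qed
next
  assume H: "K \<ge> 0 \<and> K^2 \<ge> x^2 + y^2"
  show "\<forall>t. K + x * cos t + y * sin t \<ge> 0"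
  proof
    fix t
    have e: "(x * cos t + y * sin t)^2 + (x * sin t - y * cos t)^2 = (x^2+y^2) * ((cos t)^2 + (sin t)^2)"
      by algebra
    have "(x * sin t - y * cos t)^2 \<ge> 0" by simp
    then have "(x * cos t + y * sin t)^2 \<le> (x^2+y^2) * ((cos t)^2 + (sin t)^2)"
      using e by linarith
    then have "(x * cos t + y * sin t)^2 \<le> K^2" using H by simp
    then have "\<bar>x * cos t + y * sin t\<bar> \<le> K" using H by (metis abs_le_square_iff abs_of_nonneg)
    then show "K + x * cos t + y * sin t \<ge> 0" by linarith
  qed
qed


lemma ge_sqrt_iff:
  fixes a k X :: real
  assumes "a > 0" "k > 0" "X \<ge> 0"
  shows "a \<ge> k * sqrt X \<longleftrightarrow> a^2 \<ge> k^2 * X"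
proof -
  have "k * sqrt X = sqrt (k^2 * X)" using assms by (simp add: real_sqrt_mult)
  moreover have "a = sqrt (a^2)" using assms by simp
  ultimately have "a \<ge> k * sqrt X \<longleftrightarrow> sqrt (a^2) \<ge> sqrt (k^2 * X)" by simp
  then show ?thesis by (simp only: real_sqrt_le_iff)
qed

lemma crit:
  fixes a b q s Ch Sh :: real
  assumes "a > 0" "b > 0" "q > 0" "Ch > 0"
  shows "a \<ge> 2*b*Ch* sqrt(1+((s/q)*(Sh/Ch))^2) \<longleftrightarrow> (a*q)^2 \<ge> (2*b*Ch*q)^2 + (2*b*Sh * s)^2"
proof -
  have "a \<ge> 2*b*Ch* sqrt(1+((s/q)*(Sh/Ch))^2) \<longleftrightarrow> a^2 \<ge> (2*b*Ch)^2 * (1+((s/q)*(Sh/Ch))^2)"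
    using assms by (intro ge_sqrt_iff) auto
  also have "(2*b*Ch)^2 * (1+((s/q)*(Sh/Ch))^2) = ((2*b*Ch*q)^2 + (2*b*Sh * s)^2) / q^2"
    using assms by (simp add: field_simps power2_eq_square)
  also have "a^2 \<ge> ((2*b*Ch*q)^2 + (2*b*Sh * s)^2) / q^2 \<longleftrightarrow> (a*q)^2 \<ge> (2*b*Ch*q)^2 + (2*b*Sh * s)^2"
    using assms by (simp add: pos_divide_le_eq power_mult_distrib)
  finally show ?thesis .
qed


lemma partI:
  fixes a b \<alpha> A B :: real
  assumes "a > 0" and "b > 0" and "0 < \<alpha>" and "\<alpha> < 1"
    and "0 < A" and "A < 1" and "B > 0"
    and H: "\<forall>\<omega>>0. Re (Ehat a b \<alpha> (Complex A B) \<omega>) \<ge> 0"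
  shows "A = \<alpha>"
proof (rule ccontr)
  assume ne: "A \<noteq> \<alpha>"
  define d where "d = \<alpha> - A"
  have d0: "d \<noteq> 0" using ne by (simp add: d_def)
  define q where "q = cos (\<alpha>*pi/2)"
  define C where "C = cosh (B*pi/2)"
  define cA where "cA = cos (A*pi/2)"
  have pa: "\<alpha>*pi/2 > 0" "\<alpha>*pi/2 < pi/2" "A*pi/2 > 0" "A*pi/2 < pi/2" using assms by auto
  have q: "q > 0" unfolding q_def using pa pi_gt_zero by (intro cos_gt_zero_pi) linarith+
  have cA: "cA > 0" unfolding cA_def using pa pi_gt_zero by (intro cos_gt_zero_pi) linarith+
  have C: "C > 0" by (simp add: C_def)
  define K where "K = 2*b*C*cA / (a*q)"
  have K: "K > 0" unfolding K_def using assms q cA C by simp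
  obtain m :: nat where m: "\<bar>ln K\<bar> * B / (\<bar>d\<bar> * pi) < real m" using reals_Archimedean2 by blast
  define \<phi> where "\<phi> = (if d > 0 then -1 else 1) * (real (2*m+1) * pi)"
  have c1: "cos (real (2*m+1) * pi) = -1" by (simp only: cos_npi) simp
  have s1: "sin (real (2*m+1) * pi) = 0" by (simp only: sin_npi)
  have "\<phi> = - (real (2*m+1) * pi) \<or> \<phi> = real (2*m+1) * pi" by (simp add: \<phi>_def)
  then have cphi: "cos \<phi> = -1" and sphi: "sin \<phi> = 0" using c1 s1 by (metis cos_minus sin_minus neg_0_equal_iff_equal)+
  define L where "L = \<phi> / B"
  define w where "w = exp L"
  have w: "w > 0" "ln w = L" "B * ln w = \<phi>" using assms by (auto simp: w_def L_def)
  have dL: "d * L = - (\<bar>d\<bar> * real (2*m+1) * pi / B)"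
    unfolding L_def \<phi>_def using d0 assms(7) by (cases "d > 0") (auto simp: field_simps)
  have "\<bar>ln K\<bar> * B < real m * (\<bar>d\<bar> * pi)" using m d0 by (simp add: field_simps)
  also have "\<dots> \<le> \<bar>d\<bar> * real (2*m+1) * pi" by (simp add: field_simps)
  finally have "\<bar>ln K\<bar> < \<bar>d\<bar> * real (2*m+1) * pi / B" using assms by (simp add: field_simps)
  then have "d * L < ln K" unfolding dL by linarith
  then have "exp (d * L) < K" using K by (metis exp_less_cancel_iff exp_ln)
  then have "a * q * exp (d * L) < 2*b*C*cA" unfolding K_def using assms q by (simp add: field_simps)
  then have "a * q * exp (d * L) * exp (A * L) < 2*b*C*cA * exp (A * L)" by simp
  moreover have "exp (\<alpha> * L) = exp (d * L) * exp (A * L)" by (simp add: d_def exp_add[symmetric] algebra_simps)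
  ultimately have neg: "a * exp (\<alpha> * L) * q - 2*b*exp (A * L) * C * cA < 0" by (simp add: algebra_simps)
  have "Re (Ehat a b \<alpha> (Complex A B) w) = a * exp (\<alpha> * L) * q - 2*b*exp (A * L) * C * cA"
    using Ehat_Re[of a b \<alpha> A B w] w cphi sphi by (simp add: q_def C_def cA_def)
  with neg H w show False by force
qed


lemma ge2b:
  fixes a b C X :: real
  assumes "b > 0" "C \<ge> 1" "a \<ge> 2 * b * C * sqrt (1 + X^2)"
  shows "a \<ge> 2 * b"
proof -
  have "sqrt (1 + X^2) \<ge> 1" by simp
  then have "C * sqrt (1 + X^2) \<ge> 1 * 1" using assms by (intro mult_mono) auto
  then have "2 * b * (C * sqrt (1 + X^2)) \<ge> 2 * b * 1" using assms by (intro mult_left_mono) auto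
  then show ?thesis using assms(3) by (simp only: mult.assoc)
qed

lemma bound_mono:
  fixes k X Y a :: real
  assumes "k \<ge> 0" "X^2 \<le> Y^2" "a \<ge> k * sqrt (1 + Y^2)"
  shows "a \<ge> k * sqrt (1 + X^2)"
proof -
  have "sqrt (1 + X^2) \<le> sqrt (1 + Y^2)" using assms by simp
  then have "k * sqrt (1 + X^2) \<le> k * sqrt (1 + Y^2)" using assms by (intro mult_left_mono) auto
  then show ?thesis using assms by linarith
qed

lemma sq_cmp:
  fixes s q T :: real
  assumes "s > 0" "q > 0" "s^2 \<le> q^2"
  shows "((s/q) * T)^2 \<le> ((q/s) * T)^2"
proof -
  have "(s/q)^2 \<le> 1" using assms by (simp add: power_divide)
  moreover have "1 \<le> (q/s)^2" using assms by (simp add: power_divide)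
  ultimately have "(s/q)^2 \<le> (q/s)^2" by linarith
  then have "(s/q)^2 * T^2 \<le> (q/s)^2 * T^2" by (intro mult_right_mono) auto
  then show ?thesis by (simp only: power_mult_distrib)
qed


theorem mainTheorem4:
  fixes a b \<alpha> A B :: real
  assumes "a > 0" and "b > 0" and "0 < \<alpha>" and "\<alpha> < 1"
    and "0 < A" and "A < 1" and "B > 0"
  defines "\<beta> \<equiv> Complex A B"
  shows "((\<forall>\<omega>>0. Re (Ehat a b \<alpha> \<beta> \<omega>) \<ge> 0 \<and> Im (Ehat a b \<alpha> \<beta> \<omega>) \<ge> 0) \<longrightarrow> A = \<alpha>)
    \<and> (A = \<alpha> \<longrightarrow>
         ((\<forall>\<omega>>0. Re (Ehat a b \<alpha> \<beta> \<omega>) \<ge> 0 \<and> Im (Ehat a b \<alpha> \<beta> \<omega>) \<ge> 0) \<longleftrightarrow>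
          ((\<alpha> \<le> 1/2 \<longrightarrow> a \<ge> 2 * b * cosh (B * pi / 2) *
               sqrt (1 + (cot (\<alpha> * pi / 2) * tanh (B * pi / 2))^2))
         \<and> (1/2 \<le> \<alpha> \<longrightarrow> a \<ge> 2 * b * cosh (B * pi / 2) *
               sqrt (1 + (tan (\<alpha> * pi / 2) * tanh (B * pi / 2))^2)))))
    \<and> (((\<alpha> \<le> 1/2 \<longrightarrow> a \<ge> 2 * b * cosh (B * pi / 2) *
               sqrt (1 + (cot (\<alpha> * pi / 2) * tanh (B * pi / 2))^2))
         \<and> (1/2 \<le> \<alpha> \<longrightarrow> a \<ge> 2 * b * cosh (B * pi / 2) *
               sqrt (1 + (tan (\<alpha> * pi / 2) * tanh (B * pi / 2))^2))) \<longrightarrow> a \<ge> 2 * b)"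
proof -
  define C where "C = cosh (B * pi / 2)"
  define S where "S = sinh (B * pi / 2)"
  define q where "q = cos (\<alpha> * pi / 2)"
  define s where "s = sin (\<alpha> * pi / 2)"
  define R1 where "R1 = (a \<ge> 2 * b * C * sqrt (1 + ((s/q) * (S/C))^2))"
  define R2 where "R2 = (a \<ge> 2 * b * C * sqrt (1 + ((q/s) * (S/C))^2))"
  have C1: "C \<ge> 1" by (simp add: C_def cosh_real_ge_1)
  then have C0: "C > 0" by simp
  have pa: "\<alpha>*pi/2 > 0" "\<alpha>*pi/2 < pi/2" using assms by auto
  have q: "q > 0" unfolding q_def using pa pi_gt_zero by (intro cos_gt_zero_pi) linarith+
  have s: "s > 0" unfolding s_def using pa pi_gt_zero by (intro sin_gt_zero) linarith+
  have tan_eq: "tan (\<alpha> * pi / 2) * tanh (B * pi / 2) = (s/q) * (S/C)"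
    by (simp add: tan_def tanh_def s_def q_def S_def C_def)
  have cot_eq: "cot (\<alpha> * pi / 2) * tanh (B * pi / 2) = (q/s) * (S/C)"
    by (simp add: cot_def tanh_def s_def q_def S_def C_def)
  have cosd: "cos (\<alpha> * pi) = q^2 - s^2"
    using cos_double[of "\<alpha> * pi / 2"] by (simp add: q_def s_def)
  have P3: "((\<alpha> \<le> 1/2 \<longrightarrow> R2) \<and> (1/2 \<le> \<alpha> \<longrightarrow> R1)) \<longrightarrow> a \<ge> 2 * b"
    unfolding R1_def R2_def using ge2b[OF assms(2) C1] by (cases "\<alpha> \<le> 1/2") auto
  have iff12: "(R1 \<and> R2) \<longleftrightarrow> ((\<alpha> \<le> 1/2 \<longrightarrow> R2) \<and> (1/2 \<le> \<alpha> \<longrightarrow> R1))"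
  proof (cases "\<alpha> \<le> 1/2")
    case True
    then have "\<alpha> * pi \<le> pi/2" using pi_gt_zero by (simp add: field_simps)
    moreover have "\<alpha> * pi \<ge> 0" using assms by simp
    ultimately have "cos (\<alpha> * pi) \<ge> 0" by (intro cos_ge_zero) (use pi_gt_zero in linarith)+
    then have "s^2 \<le> q^2" using cosd by simp
    then have "R2 \<longrightarrow> R1" unfolding R1_def R2_def
      using sq_cmp[OF s q, of "S/C"] bound_mono[of "2*b*C"] assms C0 by auto
    then show ?thesis using True by auto
  next
    case False
    then have "(pi - \<alpha> * pi) \<le> pi/2" using pi_gt_zero by (simp add: field_simps)
    moreover have "pi - \<alpha> * pi \<ge> 0" using assms by simp
    ultimately have "cos (pi - \<alpha> * pi) \<ge> 0" by (intro cos_ge_zero) (use pi_gt_zero in linarith)+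
    then have "q^2 \<le> s^2" using cosd by simp
    then have "R1 \<longrightarrow> R2" unfolding R1_def R2_def
      using sq_cmp[OF q s, of "S/C"] bound_mono[of "2*b*C"] assms C0 by auto
    then show ?thesis using False by auto
  qed
  have P2: "A = \<alpha> \<longrightarrow> ((\<forall>\<omega>>0. Re (Ehat a b \<alpha> \<beta> \<omega>) \<ge> 0 \<and> Im (Ehat a b \<alpha> \<beta> \<omega>) \<ge> 0) \<longleftrightarrow> R1 \<and> R2)"
  proof
    assume Aa: "A = \<alpha>"
    define F1 where "F1 t = a*q + (2*b*C*q) * cos t + (2*b*S * s) * sin t" for t
    define F2 where "F2 t = a * s + (2*b*C * s) * cos t + (-(2*b*S*q)) * sin t" for t
    have ReF: "Re (Ehat a b \<alpha> \<beta> w) = exp (\<alpha> * ln w) * F1 (B * ln w)" for w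
      unfolding \<beta>_def Ehat_Re F1_def Aa q_def s_def C_def S_def by (simp add: algebra_simps)
    have ImF: "Im (Ehat a b \<alpha> \<beta> w) = exp (\<alpha> * ln w) * F2 (B * ln w)" for w
      unfolding \<beta>_def Ehat_Im F2_def Aa q_def s_def C_def S_def by (simp add: algebra_simps)
    have eqv: "(\<forall>\<omega>>0. Re (Ehat a b \<alpha> \<beta> \<omega>) \<ge> 0 \<and> Im (Ehat a b \<alpha> \<beta> \<omega>) \<ge> 0)
       \<longleftrightarrow> (\<forall>t. F1 t \<ge> 0) \<and> (\<forall>t. F2 t \<ge> 0)"
    proof
      assume H: "\<forall>\<omega>>0. Re (Ehat a b \<alpha> \<beta> \<omega>) \<ge> 0 \<and> Im (Ehat a b \<alpha> \<beta> \<omega>) \<ge> 0"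
      have "F1 t \<ge> 0 \<and> F2 t \<ge> 0" for t
      proof -
        define w where "w = exp (t / B)"
        have w: "w > 0" "B * ln w = t" using assms by (auto simp: w_def)
        then show ?thesis using H[rule_format, OF w(1)] unfolding ReF ImF w(2)
          by (simp add: zero_le_mult_iff)
      qed
      then show "(\<forall>t. F1 t \<ge> 0) \<and> (\<forall>t. F2 t \<ge> 0)" by blast
    next
      assume H: "(\<forall>t. F1 t \<ge> 0) \<and> (\<forall>t. F2 t \<ge> 0)"
      then show "\<forall>\<omega>>0. Re (Ehat a b \<alpha> \<beta> \<omega>) \<ge> 0 \<and> Im (Ehat a b \<alpha> \<beta> \<omega>) \<ge> 0"
        unfolding ReF ImF by simp
    qed
    also have "\<dots> \<longleftrightarrow> ((a*q)^2 \<ge> (2*b*C*q)^2 + (2*b*S * s)^2) \<and> ((a * s)^2 \<ge> (2*b*C * s)^2 + (2*b*S*q)^2)"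
      unfolding F1_def F2_def amp using assms q s by simp
    also have "\<dots> \<longleftrightarrow> R1 \<and> R2"
      unfolding R1_def R2_def using crit[OF assms(1,2) q C0, of s S] crit[OF assms(1,2) s C0, of q S]
      by simp
    finally show "(\<forall>\<omega>>0. Re (Ehat a b \<alpha> \<beta> \<omega>) \<ge> 0 \<and> Im (Ehat a b \<alpha> \<beta> \<omega>) \<ge> 0) \<longleftrightarrow> R1 \<and> R2" .
  qed
  have P1: "(\<forall>\<omega>>0. Re (Ehat a b \<alpha> \<beta> \<omega>) \<ge> 0 \<and> Im (Ehat a b \<alpha> \<beta> \<omega>) \<ge> 0) \<longrightarrow> A = \<alpha>"
    using partI[OF assms(1-7)] unfolding \<beta>_def by blast
  show ?thesis
    using P1 P2 P3 iff12 unfolding tan_eq cot_eq C_def[symmetric] R1_def R2_def by blast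
qed

end
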